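(* Let $f$ be an entire function on $\mathbb{C}$. (1) For every entire function $g$ of $z$, $\Phi_{gf}=g(A(s))\Phi_f$; in particular $\Phi_f=f(A(s))\Phi_1$. (2) $$\Phi_{\partial_z f}(s)=-\nabla\Phi_f(s)+\Big(\sum_{h=0}^{k-1}(k-h)s_h\partial_{s_{h+1}}\Big)(\Phi_f)(s),$$ where $\nabla$ is the constant $(k,k)$ matrix with entries $\nabla_{i+1,i}=i$ for $i\in[1,k-1]$ and all other entries $0$.
   Context: Fix an integer $k\ge 2$. Use coordinates $s=(s_1,\dots,s_k)$ on $\mathbb{C}^k$, set $s_0:=1$, $P_s(z):=\sum_{h=0}^k(-1)^hs_hz^{k-h}$, $E(z):=(1,z,\dots,z^{k-1})^T$. For an entire $f$, $\Phi_f(s):=\frac{1}{2i\pi}\int_{|\zeta|=R}\frac{f(\zeta)E(\zeta)\,d\zeta}{P_s(\zeta)}$ with $R$ large enough that all roots of $P_s$ lie in $\{|\zeta|<R\}$; $1$ denotes the constant function $1$. $A(s)$ is the $(k,k)$ companion matrix with $A_{i,i+1}=1$ for $i\in[1,k-1]$, last row $A_{k,j}=(-1)^{k-j}s_{k+1-j}$ for $j\in[1,k]$, all other entries $0$; for an entire $g(z)=\sum_n a_nz^n$, $g(A(s)):=\sum_na_nA(s)^n$. *)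

theory Defs
  imports "HOL-Complex_Analysis.Complex_Analysis" "Jordan_Normal_Form.Matrix"
begin

text \<open>Coordinates s = (s_1,...,s_k) are given as a function s :: nat => complex
  (only s 1, ..., s k are used); the convention s_0 = 1 is built in by sc.\<close>

definition sc :: "(nat \<Rightarrow> complex) \<Rightarrow> nat \<Rightarrow> complex" where
  "sc s h = (if h = 0 then 1 else s h)"

definition Ps :: "nat \<Rightarrow> (nat \<Rightarrow> complex) \<Rightarrow> complex \<Rightarrow> complex" where
  "Ps k s z = (\<Sum>h=0..k. (-1)^h * sc s h * z^(k-h))"

text \<open>Phi_f(s), a vector of dimension k; component j (0-based) uses z^j, i.e. E(z).
  The radius R is any radius such that all roots of P_s lie in the open disc.\<close>

definition Phi :: "nat \<Rightarrow> (complex \<Rightarrow> complex) \<Rightarrow> (nat \<Rightarrow> complex) \<Rightarrow> complex vec" where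
  "Phi k f s = (let R = (SOME R::real. 0 < R \<and> (\<forall>z. Ps k s z = 0 \<longrightarrow> cmod z < R)) in
     vec k (\<lambda>j. contour_integral (circlepath 0 R) (\<lambda>\<zeta>. f \<zeta> * \<zeta>^j / Ps k s \<zeta>) / (2 * of_real pi * \<i>)))"

definition compA :: "nat \<Rightarrow> (nat \<Rightarrow> complex) \<Rightarrow> complex mat" where
  "compA k s = mat k k (\<lambda>(i,j). if i = k - 1 then (-1)^(k-1-j) * s (k - j)
                                 else if j = i + 1 then 1 else 0)"

definition mat_fun :: "(complex \<Rightarrow> complex) \<Rightarrow> complex mat \<Rightarrow> complex mat" where
  "mat_fun g M = mat (dim_row M) (dim_col M)
     (\<lambda>(i,j). \<Sum>n. (deriv ^^ n) g 0 / fact n * (M ^\<^sub>m n) $$ (i,j))"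

text \<open>nabla: entries nabla(i+1,i) = i (1-based), i.e. 0-based nabla(j+1,j) = j+1.\<close>

definition nabla :: "nat \<Rightarrow> complex mat" where
  "nabla k = mat k k (\<lambda>(i,j). if i = j + 1 then of_nat (j + 1) else 0)"

end

theory Submission
  imports Defs
begin

definition Bd :: "nat \<Rightarrow> (nat \<Rightarrow> complex) \<Rightarrow> real" where
  "Bd k s = 1 + (\<Sum>h=1..k. cmod (s h))"

definition goodR :: "nat \<Rightarrow> (nat \<Rightarrow> complex) \<Rightarrow> real \<Rightarrow> bool" where
  "goodR k s R \<longleftrightarrow> 0 < R \<and> (\<forall>z. Ps k s z = 0 \<longrightarrow> cmod z < R)"

lemma Ps_expand: "Ps k s z = z^k + (\<Sum>h=1..k. (-1)^h * s h * z^(k-h))"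
proof -
  have "{0..k} = insert 0 {1..k}" by auto
  then show ?thesis unfolding Ps_def by (simp add: sc_def)
qed

lemma Bd_ge1: "Bd k s \<ge> 1"
  unfolding Bd_def by (simp add: sum_nonneg)

lemma Ps_nz:
  assumes "k \<ge> 1" "cmod z \<ge> Bd k s"
  shows "Ps k s z \<noteq> 0"
proof
  assume P0: "Ps k s z = 0"
  define T where "T = (\<Sum>h=1..k. (-1)^h * s h * z^(k-h))"
  have z1: "cmod z \<ge> 1" using assms Bd_ge1[of k s] by linarith
  have "cmod T \<le> (\<Sum>h=1..k. cmod ((-1)^h * s h * z^(k-h)))"
    unfolding T_def by (rule norm_sum)
  also have "\<dots> \<le> (\<Sum>h=1..k. cmod (s h) * cmod z ^ (k-1))"
  proof (rule sum_mono)
    fix h assume h: "h \<in> {1..k}"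
    have "cmod z ^ (k-h) \<le> cmod z ^ (k-1)"
      using h z1 by (intro power_increasing) auto
    then show "cmod ((-1)^h * s h * z^(k-h)) \<le> cmod (s h) * cmod z ^ (k-1)"
      by (simp add: norm_mult norm_power mult_left_mono)
  qed
  also have "\<dots> = (Bd k s - 1) * cmod z ^ (k-1)"
    unfolding Bd_def by (simp add: sum_distrib_right)
  also have "\<dots> < cmod z * cmod z ^ (k-1)"
  proof (rule mult_strict_right_mono)
    show "0 < cmod z ^ (k-1)" using z1 by (intro zero_less_power) linarith
  qed (use z1 assms(2) in auto)
  also have "\<dots> = cmod z ^ k"
    using assms(1) by (metis Suc_diff_le diff_Suc_1 power_Suc)
  finally have lt: "cmod T < cmod (z^k)" by (simp add: norm_power)
  have "z^k = - T" using P0 unfolding Ps_expand T_def by (simp add: add_eq_0_iff)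
  then show False using lt by simp
qed

lemma goodR_Bd: "k \<ge> 1 \<Longrightarrow> R \<ge> Bd k s \<Longrightarrow> goodR k s R"
proof -
  assume k: "k \<ge> 1" and R: "R \<ge> Bd k s"
  have "cmod z < R" if "Ps k s z = 0" for z
  proof (rule ccontr)
    assume "\<not> cmod z < R"
    then have "cmod z \<ge> Bd k s" using R by linarith
    then show False using Ps_nz[OF k] that by blast
  qed
  moreover have "R > 0" using R Bd_ge1[of k s] by linarith
  ultimately show ?thesis unfolding goodR_def by blast
qed

lemma goodR_Rs:
  assumes "k \<ge> 1"
  shows "goodR k s (SOME R::real. 0 < R \<and> (\<forall>z. Ps k s z = 0 \<longrightarrow> cmod z < R))"
proof -
  have "\<exists>R::real. 0 < R \<and> (\<forall>z. Ps k s z = 0 \<longrightarrow> cmod z < R)"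
    using goodR_Bd[OF assms order_refl] unfolding goodR_def by blast
  from someI_ex[OF this] show ?thesis unfolding goodR_def .
qed

lemma goodR_sphere: "goodR k s R \<Longrightarrow> z \<in> sphere 0 R \<Longrightarrow> Ps k s z \<noteq> 0"
  unfolding goodR_def by auto

lemma Ps_holo[holomorphic_intros]: "(\<lambda>z. Ps k s z) holomorphic_on A"
  unfolding Ps_def by (intro holomorphic_intros)

lemma Ps_cont[continuous_intros]: "continuous_on A g \<Longrightarrow> continuous_on A (\<lambda>x. Ps k s (g x))"
  unfolding Ps_def by (intro continuous_intros)

lemma int1:
  assumes "continuous_on UNIV F" "goodR k s R"
  shows "(\<lambda>z. F z / Ps k s z) contour_integrable_on circlepath 0 R"
proof (rule contour_integrable_continuous_circlepath)
  have R: "R > 0" using assms(2) unfolding goodR_def by auto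
  show "continuous_on (path_image (circlepath 0 R)) (\<lambda>z. F z / Ps k s z)"
    unfolding path_image_circlepath_nonneg[OF less_imp_le[OF R]]
    using goodR_sphere[OF assms(2)] continuous_on_subset[OF assms(1)]
    by (intro continuous_intros) auto
qed

lemma int2:
  assumes "continuous_on UNIV F" "goodR k s R"
  shows "(\<lambda>z. F z / (Ps k s z)^2) contour_integrable_on circlepath 0 R"
proof (rule contour_integrable_continuous_circlepath)
  have R: "R > 0" using assms(2) unfolding goodR_def by auto
  show "continuous_on (path_image (circlepath 0 R)) (\<lambda>z. F z / (Ps k s z)^2)"
    unfolding path_image_circlepath_nonneg[OF less_imp_le[OF R]]
    using goodR_sphere[OF assms(2)] continuous_on_subset[OF assms(1)]
    by (intro continuous_intros) auto
qed

lemma seg_norm: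
  assumes "cmod e = 1" "x \<in> closed_segment (of_real R1 * e) (of_real R2 * e)" "R1 \<ge> 0" "R2 \<ge> 0"
  shows "cmod x \<ge> min R1 R2"
proof -
  obtain u where u: "0 \<le> u" "u \<le> 1" and x: "x = (1 - u) *\<^sub>R (of_real R1 * e) + u *\<^sub>R (of_real R2 * e)"
    using assms(2) unfolding closed_segment_def by auto
  have xe: "x = of_real ((1-u) * R1 + u * R2) * e" unfolding x by (simp add: scaleR_conv_of_real algebra_simps)
  have nn: "(1-u) * R1 + u * R2 \<ge> 0" using u assms by simp
  have "cmod x = \<bar>(1-u) * R1 + u * R2\<bar> * cmod e" by (simp only: xe norm_mult norm_of_real)
  then have "cmod x = (1-u) * R1 + u * R2" using nn assms(1) by simp
  moreover have "(1-u) * R1 + u * R2 \<ge> (1-u) * min R1 R2 + u * min R1 R2"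
    using u by (intro add_mono mult_left_mono) auto
  ultimately show ?thesis by (simp add: algebra_simps)
qed

lemma indep:
  assumes F: "F holomorphic_on UNIV" and g1: "goodR k s R1" and g2: "goodR k s R2"
  shows "contour_integral (circlepath 0 R1) (\<lambda>z. F z / Ps k s z) =
         contour_integral (circlepath 0 R2) (\<lambda>z. F z / Ps k s z)"
proof (rule Cauchy_theorem_homotopic_loops)
  let ?S = "{z. Ps k s z \<noteq> 0}"
  show "open ?S"
    by (rule open_Collect_neq) (intro continuous_intros)+
  show "(\<lambda>z. F z / Ps k s z) holomorphic_on ?S"
    using F by (intro holomorphic_intros) (auto intro: holomorphic_on_subset)
  show "valid_path (circlepath 0 R1)" "valid_path (circlepath 0 R2)" by auto
  have R: "R1 > 0" "R2 > 0" using g1 g2 unfolding goodR_def by auto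
  show "homotopic_loops ?S (circlepath 0 R1) (circlepath 0 R2)"
  proof (rule homotopic_loops_linear)
    fix t :: real assume t: "t \<in> {0..1}"
    let ?e = "exp (\<i> * of_real (2 * pi * t))"
    have e: "cmod ?e = 1" by simp
    have c1: "circlepath 0 R1 t = of_real R1 * ?e" "circlepath 0 R2 t = of_real R2 * ?e"
      by (simp_all add: circlepath mult_ac)
    show "closed_segment (circlepath 0 R1 t) (circlepath 0 R2 t) \<subseteq> ?S"
    proof
      fix x assume "x \<in> closed_segment (circlepath 0 R1 t) (circlepath 0 R2 t)"
      then have "cmod x \<ge> min R1 R2" using seg_norm[OF e, of x R1 R2] R c1 by auto
      then show "x \<in> ?S" using g1 g2 unfolding goodR_def by (auto simp: min_def split: if_splits)
    qed
  qed auto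
qed

lemma Phi_eq:
  assumes "f holomorphic_on UNIV" "goodR k s R" "j < k"
  shows "Phi k f s $ j = contour_integral (circlepath 0 R) (\<lambda>z. f z * z^j / Ps k s z) / (2 * of_real pi * \<i>)"
proof -
  have k: "k \<ge> 1" using assms(3) by auto
  have "(\<lambda>z. f z * z^j) holomorphic_on UNIV" using assms(1) by (intro holomorphic_intros)
  from indep[OF this goodR_Rs[OF k] assms(2)] show ?thesis
    unfolding Phi_def Let_def using assms(3) by simp
qed

lemma Ps_sum_eq: "(\<Sum>h=0..k. (-1)^h * sc s h * z^(k-h)) = Ps k s z"
  unfolding Ps_def by simp

lemma cauchy_zero:
  assumes "F holomorphic_on UNIV" "R > 0"
  shows "contour_integral (circlepath 0 R) F = 0"
  using Cauchy_theorem_convex_simple[OF assms(1) convex_UNIV, of "circlepath 0 R"]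
  by (auto intro: contour_integral_unique)

lemma recur:
  assumes f: "f holomorphic_on UNIV" and g: "goodR k s R"
  shows "(\<Sum>h=0..k. (-1)^h * sc s h * contour_integral (circlepath 0 R) (\<lambda>z. f z * z^(k-h) / Ps k s z)) = 0"
proof -
  have fc: "continuous_on UNIV f" using f holomorphic_on_imp_continuous_on by blast
  have R: "R > 0" using g unfolding goodR_def by auto
  have ii: "(\<lambda>z. f z * z^n / Ps k s z) contour_integrable_on circlepath 0 R" for n
    by (rule int1[OF _ g]) (intro continuous_intros fc)
  have "(\<Sum>h=0..k. (-1)^h * sc s h * contour_integral (circlepath 0 R) (\<lambda>z. f z * z^(k-h) / Ps k s z))
      = (\<Sum>h=0..k. contour_integral (circlepath 0 R) (\<lambda>z. (-1)^h * sc s h * (f z * z^(k-h) / Ps k s z)))"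
    by (intro sum.cong refl contour_integral_lmul[symmetric] ii)
  also have "\<dots> = contour_integral (circlepath 0 R) (\<lambda>z. \<Sum>h=0..k. (-1)^h * sc s h * (f z * z^(k-h) / Ps k s z))"
  proof (rule contour_integral_sum[symmetric])
    fix h show "(\<lambda>z. (-1)^h * sc s h * (f z * z^(k-h) / Ps k s z)) contour_integrable_on circlepath 0 R"
      by (rule contour_integrable_lmul[OF ii])
  qed simp
  also have "\<dots> = contour_integral (circlepath 0 R) f"
  proof (rule contour_integral_eq)
    fix z assume "z \<in> path_image (circlepath 0 R)"
    then have nz: "Ps k s z \<noteq> 0" using goodR_sphere[OF g] R by (simp add: path_image_circlepath_nonneg)
    have "(\<Sum>h=0..k. (-1)^h * sc s h * (f z * z^(k-h) / Ps k s z)) = f z * (\<Sum>h=0..k. (-1)^h * sc s h * z^(k-h)) / Ps k s z"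
      by (simp add: sum_distrib_left sum_divide_distrib mult_ac)
    also have "\<dots> = f z" using nz by (simp add: Ps_sum_eq)
    finally show "(\<Sum>h=0..k. (-1)^h * sc s h * (f z * z^(k-h) / Ps k s z)) = f z" .
  qed
  also have "\<dots> = 0" by (rule cauchy_zero[OF f R])
  finally show ?thesis .
qed

lemma compA_carrier: "compA k s \<in> carrier_mat k k"
  unfolding compA_def by simp

lemma compA_dims[simp]: "dim_row (compA k s) = k" "dim_col (compA k s) = k"
  unfolding compA_def by simp_all

lemma Phi_dim: "dim_vec (Phi k f s) = k"
  unfolding Phi_def Let_def by (simp only: dim_vec)

lemma Phi_carrier: "Phi k f s \<in> carrier_vec k"
  by (rule carrier_vecI[OF Phi_dim])

lemma shift:
  assumes f: "f holomorphic_on UNIV" and k: "k \<ge> 1"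
  shows "Phi k (\<lambda>z. z * f z) s = compA k s *\<^sub>v Phi k f s"
proof (rule eq_vecI)
  define R where "R = Bd k s"
  have g: "goodR k s R" unfolding R_def by (rule goodR_Bd[OF k order_refl])
  define c where "c = 2 * of_real pi * \<i>"
  define J where "J n = contour_integral (circlepath 0 R) (\<lambda>z. f z * z^n / Ps k s z)" for n
  have zf: "(\<lambda>z. z * f z) holomorphic_on UNIV" using f by (intro holomorphic_intros)
  have PhiJ: "Phi k f s $ j = J j / c" if "j < k" for j
    unfolding J_def c_def by (rule Phi_eq[OF f g that])
  show "dim_vec (Phi k (\<lambda>z. z * f z) s) = dim_vec (compA k s *\<^sub>v Phi k f s)"
    using compA_carrier by (simp add: Phi_dim)
  fix i assume "i < dim_vec (compA k s *\<^sub>v Phi k f s)"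
  then have i: "i < k" using compA_carrier by simp
  have "Phi k (\<lambda>z. z * f z) s $ i = contour_integral (circlepath 0 R) (\<lambda>z. z * f z * z^i / Ps k s z) / c"
    unfolding c_def by (rule Phi_eq[OF zf g i])
  also have "(\<lambda>z. z * f z * z^i / Ps k s z) = (\<lambda>z. f z * z^(Suc i) / Ps k s z)"
    by (auto simp: fun_eq_iff mult_ac)
  finally have L: "Phi k (\<lambda>z. z * f z) s $ i = J (Suc i) / c" unfolding J_def .
  have Rr: "(compA k s *\<^sub>v Phi k f s) $ i = (\<Sum>l=0..<k. compA k s $$ (i,l) * (J l / c))"
    using i compA_carrier by (simp add: scalar_prod_def Phi_dim PhiJ)
  show "Phi k (\<lambda>z. z * f z) s $ i = (compA k s *\<^sub>v Phi k f s) $ i"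
  proof (cases "i = k - 1")
    case False
    have "(\<Sum>l=0..<k. compA k s $$ (i,l) * (J l / c)) = (\<Sum>l=0..<k. if l = Suc i then J l / c else 0)"
      using i False by (intro sum.cong refl) (auto simp: compA_def)
    also have "\<dots> = J (Suc i) / c" using i False by simp
    finally show ?thesis using L Rr by simp
  next
    case True
    have "(\<Sum>l=0..<k. compA k s $$ (i,l) * (J l / c)) = (\<Sum>l=0..<k. (-1)^(k-1-l) * s (k - l) * J l) / c"
      using i True by (simp add: compA_def sum_divide_distrib)
    also have "(\<Sum>l=0..<k. (-1)^(k-1-l) * s (k - l) * J l) = - (\<Sum>l=0..<k. (-1)^(k-l) * s (k - l) * J l)"
    proof -
      have "(\<Sum>l=0..<k. (-1)^(k-1-l) * s (k - l) * J l) = (\<Sum>l=0..<k. - ((-1)^(k-l) * s (k - l) * J l))"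
      proof (intro sum.cong refl)
        fix l assume "l \<in> {0..<k}"
        then have "k - l = Suc (k-1-l)" by auto
        then show "(-1)^(k-1-l) * s (k - l) * J l = - ((-1)^(k-l) * s (k - l) * J l)" by simp
      qed
      then show ?thesis by (simp add: sum_negf)
    qed
    also have "(\<Sum>l=0..<k. (-1)^(k-l) * s (k - l) * J l) = (\<Sum>h=1..k. (-1)^h * sc s h * J (k - h))"
      by (rule sum.reindex_bij_witness[of _ "\<lambda>h. k - h" "\<lambda>l. k - l"]) (auto simp: sc_def)
    also have "\<dots> = - J k"
    proof -
      have "{0..k} = insert 0 {1..k}" by auto
      then have "(\<Sum>h=0..k. (-1)^h * sc s h * J (k - h)) = J k + (\<Sum>h=1..k. (-1)^h * sc s h * J (k - h))"
        by (simp add: sc_def)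
      moreover have "(\<Sum>h=0..k. (-1)^h * sc s h * J (k - h)) = 0"
        unfolding J_def by (rule recur[OF f g])
      ultimately show ?thesis by (simp add: eq_neg_iff_add_eq_0 add.commute)
    qed
    finally show ?thesis using L Rr True k by simp
  qed
qed

lemma power_shift:
  assumes f: "f holomorphic_on UNIV" and k: "k \<ge> 1"
  shows "Phi k (\<lambda>z. z^n * f z) s = (compA k s ^\<^sub>m n) *\<^sub>v Phi k f s"
  using f
proof (induction n arbitrary: f)
  case 0
  have "(compA k s ^\<^sub>m 0) = 1\<^sub>m k" using compA_carrier[of k s] by simp
  then show ?case using Phi_carrier by simp
next
  case (Suc n)
  have zf: "(\<lambda>z. z * f z) holomorphic_on UNIV" using Suc.prems by (intro holomorphic_intros)
  have "(\<lambda>z. z^Suc n * f z) = (\<lambda>z. z^n * (z * f z))" by (auto simp: fun_eq_iff mult_ac)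
  then have "Phi k (\<lambda>z. z^Suc n * f z) s = (compA k s ^\<^sub>m n) *\<^sub>v Phi k (\<lambda>z. z * f z) s"
    using Suc.IH[OF zf] by simp
  also have "\<dots> = (compA k s ^\<^sub>m n) *\<^sub>v (compA k s *\<^sub>v Phi k f s)"
    using shift[OF Suc.prems k] by simp
  also have "\<dots> = (compA k s ^\<^sub>m n * compA k s) *\<^sub>v Phi k f s"
    using compA_carrier Phi_carrier by (subst assoc_mult_mat_vec) (auto intro: pow_carrier_mat)
  finally show ?case by simp
qed

lemma pow_entry_bound:
  fixes A :: "complex mat"
  assumes A: "A \<in> carrier_mat k k"
    and C: "C = 1 + (\<Sum>i<k. \<Sum>j<k. cmod (A $$ (i,j)))"
  shows "i < k \<Longrightarrow> j < k \<Longrightarrow> cmod ((A ^\<^sub>m n) $$ (i,j)) \<le> C ^ n"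
proof (induction n arbitrary: i j)
  case 0
  have "C \<ge> 1" unfolding C by (simp add: sum_nonneg)
  then show ?case using 0 A by auto
next
  case (Suc n)
  have C0: "C \<ge> 0" unfolding C by (simp add: sum_nonneg)
  have col: "(\<Sum>l<k. cmod (A $$ (l,j))) \<le> C"
  proof -
    have "(\<Sum>l<k. cmod (A $$ (l,j))) \<le> (\<Sum>l<k. \<Sum>j'<k. cmod (A $$ (l,j')))"
      using Suc.prems by (intro sum_mono member_le_sum) auto
    then show ?thesis unfolding C by linarith
  qed
  have "(A ^\<^sub>m Suc n) $$ (i,j) = (\<Sum>l<k. (A ^\<^sub>m n) $$ (i,l) * A $$ (l,j))"
    using Suc.prems A by (simp add: scalar_prod_def atLeast0LessThan)
  then have "cmod ((A ^\<^sub>m Suc n) $$ (i,j)) \<le> (\<Sum>l<k. cmod ((A ^\<^sub>m n) $$ (i,l)) * cmod (A $$ (l,j)))"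
    by (simp add: norm_mult[symmetric] norm_sum)
  also have "\<dots> \<le> (\<Sum>l<k. C ^ n * cmod (A $$ (l,j)))"
    using Suc by (intro sum_mono mult_right_mono) auto
  also have "\<dots> = C^n * (\<Sum>l<k. cmod (A $$ (l,j)))" by (simp add: sum_distrib_left)
  also have "\<dots> \<le> C^n * C" using col C0 by (intro mult_left_mono) auto
  finally show ?case by (simp add: mult.commute)
qed

lemma entire_coeff_summable:
  assumes g: "g holomorphic_on UNIV" and C: "C \<ge> 0"
  shows "summable (\<lambda>n. cmod ((deriv ^^ n) g 0 / fact n) * C ^ n)"
proof -
  have "((\<lambda>n. (deriv ^^ n) g 0 / fact n * (of_real (C+1) - 0)^n) sums g (of_real (C+1)))"
    by (rule holomorphic_power_series[where r="C+2"]) (use g C in \<open>auto intro: holomorphic_on_subset\<close>)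
  then have sm: "summable (\<lambda>n. (deriv ^^ n) g 0 / fact n * (of_real (C+1))^n)"
    by (simp add: sums_iff)
  have *: "summable (\<lambda>n. norm ((deriv ^^ n) g 0 / fact n * (of_real C :: complex)^n))"
    by (rule powser_insidea[OF sm]) (use C in simp)
  show ?thesis
    using * by (simp only: norm_mult norm_power norm_of_real abs_of_nonneg[OF C])
qed

lemma series:
  assumes f: "f holomorphic_on UNIV" and g: "g holomorphic_on UNIV" and k: "k \<ge> 1" and i: "i < k"
  shows "(\<lambda>n. (deriv ^^ n) g 0 / fact n * Phi k (\<lambda>z. z^n * f z) s $ i) sums (Phi k (\<lambda>z. g z * f z) s $ i)"
proof -
  define a where "a n = (deriv ^^ n) g 0 / fact n" for n
  define R where "R = Bd k s"
  have gR: "goodR k s R" unfolding R_def by (rule goodR_Bd[OF k order_refl])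
  have R: "R > 0" using gR unfolding goodR_def by auto
  define c where "c = 2 * of_real pi * \<i>"
  define H where "H z = f z * z^i / Ps k s z" for z
  define I where "I n = contour_integral (circlepath 0 R) (\<lambda>z. z^n * H z)" for n
  have fc: "continuous_on UNIV f" using f holomorphic_on_imp_continuous_on by blast
  have nzs: "Ps k s z \<noteq> 0" if "z \<in> sphere 0 R" for z using goodR_sphere[OF gR that] .
  have Hc: "continuous_on (sphere 0 R) H"
    unfolding H_def using nzs continuous_on_subset[OF fc] by (intro continuous_intros) auto
  have intn: "(\<lambda>z. z^n * H z) contour_integrable_on circlepath 0 R" for n
  proof -
    have "(\<lambda>z. (z^n * f z * z^i) / Ps k s z) contour_integrable_on circlepath 0 R"
      by (rule int1[OF _ gR]) (intro continuous_intros fc)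
    then show ?thesis by (simp add: H_def mult_ac times_divide_eq_right)
  qed
  obtain M where M: "M > 0" "\<And>z. z \<in> sphere 0 R \<Longrightarrow> cmod (H z) \<le> M"
    using compact_imp_bounded[OF compact_continuous_image[OF Hc compact_sphere]]
    unfolding bounded_pos by auto
  have gs: "(\<lambda>n. a n * z^n) sums g z" for z :: complex
    using holomorphic_power_series[where r="cmod z + 1" and z=0 and w=z and f=g] g
    by (auto simp: a_def intro: holomorphic_on_subset)
  have ul: "uniform_limit (sphere 0 R) (\<lambda>N z. \<Sum>n<N. a n * (z^n * H z)) (\<lambda>z. g z * H z) sequentially"
  proof -
    have "uniform_limit (sphere 0 R) (\<lambda>N z. \<Sum>n<N. a n * (z^n * H z)) (\<lambda>z. \<Sum>n. a n * (z^n * H z)) sequentially"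
    proof (rule Weierstrass_m_test)
      fix n and z :: complex assume z: "z \<in> sphere 0 R"
      have "cmod (a n * (z^n * H z)) = cmod (a n) * R^n * cmod (H z)"
        using z by (simp add: norm_mult norm_power)
      also have "\<dots> \<le> cmod (a n) * R^n * M"
        using M z R by (intro mult_left_mono) auto
      finally show "cmod (a n * (z^n * H z)) \<le> cmod (a n) * R^n * M" .
    next
      show "summable (\<lambda>n. cmod (a n) * R^n * M)"
        unfolding a_def by (intro summable_mult2 entire_coeff_summable g) (use R in auto)
    qed
    moreover have "(\<Sum>n. a n * (z^n * H z)) = g z * H z" for z
    proof -
      have "(\<lambda>n. a n * z^n * H z) sums (g z * H z)" by (rule sums_mult2[OF gs])
      then show ?thesis by (simp add: sums_iff mult_ac)
    qed
    ultimately show ?thesis by simp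
  qed
  have lim: "((\<lambda>N. contour_integral (circlepath 0 R) (\<lambda>z. \<Sum>n<N. a n * (z^n * H z))) \<longlongrightarrow>
               contour_integral (circlepath 0 R) (\<lambda>z. g z * H z)) sequentially"
  proof (rule contour_integral_uniform_limit_circlepath(2))
    show "\<forall>\<^sub>F N in sequentially. (\<lambda>z. \<Sum>n<N. a n * (z^n * H z)) contour_integrable_on circlepath 0 R"
      by (intro always_eventually allI contour_integrable_sum finite_lessThan contour_integrable_lmul intn)
  qed (use ul R in auto)
  have "contour_integral (circlepath 0 R) (\<lambda>z. \<Sum>n<N. a n * (z^n * H z)) = (\<Sum>n<N. a n * I n)" for N
    unfolding I_def
    by (subst contour_integral_sum) (auto intro: contour_integrable_lmul intn simp: contour_integral_lmul[OF intn])
  with lim have "(\<lambda>n. a n * I n) sums contour_integral (circlepath 0 R) (\<lambda>z. g z * H z)"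
    unfolding sums_def by simp
  from sums_divide[OF this, of c]
  have S: "(\<lambda>n. a n * (I n / c)) sums (contour_integral (circlepath 0 R) (\<lambda>z. g z * H z) / c)"
    by simp
  have zf: "(\<lambda>z. z^n * f z) holomorphic_on UNIV" for n using f by (intro holomorphic_intros)
  have gf: "(\<lambda>z. g z * f z) holomorphic_on UNIV" using f g by (intro holomorphic_intros)
  have e1: "Phi k (\<lambda>z. z^n * f z) s $ i = I n / c" for n
    unfolding Phi_eq[OF zf gR i] I_def H_def c_def by (simp add: mult_ac times_divide_eq_right)
  have e2: "Phi k (\<lambda>z. g z * f z) s $ i = contour_integral (circlepath 0 R) (\<lambda>z. g z * H z) / c"
    unfolding Phi_eq[OF gf gR i] H_def c_def by (simp add: mult_ac times_divide_eq_right)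
  show ?thesis using S unfolding e1 e2 a_def .
qed

lemma mat_fun_dims[simp]: "dim_row (mat_fun g A) = dim_row A" "dim_col (mat_fun g A) = dim_col A"
  unfolding mat_fun_def by simp_all

lemma matvec_series:
  assumes g: "g holomorphic_on UNIV" and v: "v \<in> carrier_vec k" and i: "i < k"
  shows "(mat_fun g (compA k s) *\<^sub>v v) $ i = (\<Sum>n. (deriv ^^ n) g 0 / fact n * ((compA k s ^\<^sub>m n) *\<^sub>v v) $ i)"
proof -
  define A where "A = compA k s"
  have A: "A \<in> carrier_mat k k" unfolding A_def by (rule compA_carrier)
  define a where "a n = (deriv ^^ n) g 0 / fact n" for n
  define C where "C = 1 + (\<Sum>i<k. \<Sum>j<k. cmod (A $$ (i,j)))"
  have C0: "C \<ge> 0" unfolding C_def by (simp add: sum_nonneg)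
  have sa: "summable (\<lambda>n. cmod (a n) * C ^ n)"
    unfolding a_def by (rule entire_coeff_summable[OF g C0])
  have sm0: "summable (\<lambda>n. a n * (A ^\<^sub>m n) $$ (i,l))" if l: "l < k" for l
  proof (rule summable_comparison_test'[OF sa])
    fix n :: nat
    have "cmod ((A ^\<^sub>m n) $$ (i,l)) \<le> C^n" by (rule pow_entry_bound[OF A C_def i l])
    then show "cmod (a n * (A ^\<^sub>m n) $$ (i,l)) \<le> cmod (a n) * C^n"
      by (simp add: norm_mult mult_left_mono)
  qed
  have sm: "summable (\<lambda>n. a n * (A ^\<^sub>m n) $$ (i,l) * v $ l)" if l: "l < k" for l
    by (rule summable_mult2[OF sm0[OF l]])
  have "(mat_fun g A *\<^sub>v v) $ i = (\<Sum>l=0..<k. (\<Sum>n. a n * (A ^\<^sub>m n) $$ (i,l)) * v $ l)"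
    using A v i by (simp add: scalar_prod_def mat_fun_def a_def)
  also have "\<dots> = (\<Sum>l=0..<k. \<Sum>n. a n * (A ^\<^sub>m n) $$ (i,l) * v $ l)"
  proof (intro sum.cong refl)
    fix l assume "l \<in> {0..<k}"
    then have "l < k" by simp
    from suminf_mult2[OF sm0[OF this], of "v $ l"]
    show "(\<Sum>n. a n * (A ^\<^sub>m n) $$ (i,l)) * v $ l = (\<Sum>n. a n * (A ^\<^sub>m n) $$ (i,l) * v $ l)" .
  qed
  also have "\<dots> = (\<Sum>n. \<Sum>l=0..<k. a n * (A ^\<^sub>m n) $$ (i,l) * v $ l)"
    by (rule suminf_sum[symmetric]) (use sm in auto)
  also have "\<dots> = (\<Sum>n. a n * ((A ^\<^sub>m n) *\<^sub>v v) $ i)"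
    using A v i by (simp add: scalar_prod_def sum_distrib_left mult_ac)
  finally show ?thesis unfolding A_def a_def .
qed

lemma part1:
  assumes f: "f holomorphic_on UNIV" and g: "g holomorphic_on UNIV" and k: "k \<ge> 1"
  shows "Phi k (\<lambda>z. g z * f z) s = mat_fun g (compA k s) *\<^sub>v Phi k f s"
proof (rule eq_vecI)
  show "dim_vec (Phi k (\<lambda>z. g z * f z) s) = dim_vec (mat_fun g (compA k s) *\<^sub>v Phi k f s)"
    by (simp add: Phi_dim)
  fix i assume "i < dim_vec (mat_fun g (compA k s) *\<^sub>v Phi k f s)"
  then have i: "i < k" by simp
  have "Phi k (\<lambda>z. g z * f z) s $ i = (\<Sum>n. (deriv ^^ n) g 0 / fact n * Phi k (\<lambda>z. z^n * f z) s $ i)"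
    using series[OF f g k i] by (simp add: sums_iff)
  also have "\<dots> = (\<Sum>n. (deriv ^^ n) g 0 / fact n * ((compA k s ^\<^sub>m n) *\<^sub>v Phi k f s) $ i)"
    using power_shift[OF f k] by simp
  also have "\<dots> = (mat_fun g (compA k s) *\<^sub>v Phi k f s) $ i"
    by (rule matvec_series[OF g Phi_carrier i, symmetric])
  finally show "Phi k (\<lambda>z. g z * f z) s $ i = (mat_fun g (compA k s) *\<^sub>v Phi k f s) $ i" .
qed

lemma Ps_upd:
  assumes m: "m \<in> {1..k}"
  shows "Ps k (s(m:=t)) z = Ps k s z + (-1)^m * (t - s m) * z^(k-m)"
proof -
  have "Ps k (s(m:=t)) z = (\<Sum>h=0..k. (-1)^h * sc s h * z^(k-h) + (if h = m then (-1)^m * (t - s m) * z^(k-m) else 0))"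
    unfolding Ps_def
  proof (intro sum.cong refl)
    fix h assume "h \<in> {0..k}"
    show "(-1)^h * sc (s(m:=t)) h * z^(k-h) = (-1)^h * sc s h * z^(k-h) + (if h = m then (-1)^m * (t - s m) * z^(k-m) else 0)"
      using m by (auto simp: sc_def algebra_simps)
  qed
  also have "\<dots> = Ps k s z + (-1)^m * (t - s m) * z^(k-m)"
    using m unfolding Ps_def by (simp add: sum.distrib)
  finally show ?thesis .
qed

lemma Bd_upd:
  assumes m: "m \<in> {1..k}"
  shows "Bd k (s(m:=t)) \<le> Bd k s + cmod (t - s m)"
proof -
  have "(\<Sum>h=1..k. cmod ((s(m:=t)) h)) \<le> (\<Sum>h=1..k. cmod (s h) + (if h = m then cmod (t - s m) else 0))"
  proof (intro sum_mono)
    fix h assume "h \<in> {1..k}"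
    have "cmod t \<le> cmod (s m) + cmod (t - s m)" by (metis norm_triangle_sub add.commute)
    then show "cmod ((s(m:=t)) h) \<le> cmod (s h) + (if h = m then cmod (t - s m) else 0)" by auto
  qed
  also have "\<dots> = (\<Sum>h=1..k. cmod (s h)) + cmod (t - s m)"
    using m by (simp add: sum.distrib)
  finally show ?thesis unfolding Bd_def by simp
qed

lemma ulim_param:
  fixes G :: "complex \<Rightarrow> complex \<Rightarrow> complex"
  assumes cont: "continuous_on (cball a r \<times> S) (\<lambda>x. G (fst x) (snd x))" and S: "compact S" and r: "r > 0"
  shows "uniform_limit S G (G a) (at a)"
proof -
  have uc: "uniformly_continuous_on (cball a r \<times> S) (\<lambda>x. G (fst x) (snd x))"
    by (rule compact_uniformly_continuous[OF cont compact_Times[OF compact_cball S]])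
  show ?thesis
    unfolding uniform_limit_iff
  proof (intro allI impI)
    fix e :: real assume e: "e > 0"
    obtain d where d: "d > 0" and dd: "\<And>x x'. x \<in> cball a r \<times> S \<Longrightarrow> x' \<in> cball a r \<times> S \<Longrightarrow> dist x' x < d \<Longrightarrow>
        dist (G (fst x') (snd x')) (G (fst x) (snd x)) < e"
      using uc e unfolding uniformly_continuous_on_def by metis
    have ev: "\<forall>\<^sub>F t in at a. t \<in> ball a (min d r)"
      using eventually_at_ball[of "min d r" a UNIV] d r by simp
    show "\<forall>\<^sub>F t in at a. \<forall>z\<in>S. dist (G t z) (G a z) < e"
    proof (rule eventually_mono[OF ev], intro ballI)
      fix t z assume t: "t \<in> ball a (min d r)" and z: "z \<in> S"
      have "(a, z) \<in> cball a r \<times> S" "(t, z) \<in> cball a r \<times> S" using z t r by (auto simp: dist_commute)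
      moreover have "dist (t, z) (a, z) < d" using t by (simp add: dist_Pair_Pair dist_commute)
      ultimately show "dist (G t z) (G a z) < e" using dd by fastforce
    qed
  qed
qed

lemma ci_deriv:
  assumes F: "continuous_on UNIV F" and k: "k \<ge> 1" and m: "m \<in> {1..k}"
  shows "((\<lambda>t. contour_integral (circlepath 0 (Bd k s + 1)) (\<lambda>z. F z / Ps k (s(m:=t)) z)) has_field_derivative
          contour_integral (circlepath 0 (Bd k s + 1)) (\<lambda>z. - ((-1)^m * F z * z^(k-m)) / (Ps k s z)^2)) (at (s m))"
proof -
  define R where "R = Bd k s + 1"
  define a where "a = s m"
  define Q where "Q t z = Ps k s z + (-1)^m * (t - a) * z^(k-m)" for t z
  have PQ: "Ps k (s(m:=t)) z = Q t z" for t z using Ps_upd[OF m] unfolding Q_def a_def by simp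
  have Qa: "Q a z = Ps k s z" for z unfolding Q_def by simp
  have R0: "R > 0" using Bd_ge1[of k s] unfolding R_def by simp
  have good: "goodR k (s(m:=t)) R" if "cmod (t - a) \<le> 1" for t
  proof (rule goodR_Bd[OF k])
    show "Bd k (s(m:=t)) \<le> R" using Bd_upd[OF m, of s t] that unfolding R_def a_def by simp
  qed
  have Qnz: "Q t z \<noteq> 0" if "cmod (t - a) \<le> 1" "z \<in> sphere 0 R" for t z
    using goodR_sphere[OF good[OF that(1)] that(2)] PQ by simp
  have P0: "Ps k s z \<noteq> 0" if "z \<in> sphere 0 R" for z
    using Qnz[of a z] that Qa by simp
  define G where "G t z = - ((-1)^m * F z * z^(k-m)) / (Q t z * Ps k s z)" for t z
  define I where "I t = contour_integral (circlepath 0 R) (\<lambda>z. F z / Q t z)" for t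
  have Fs: "continuous_on A (\<lambda>x. F (snd x))" for A :: "(complex \<times> complex) set"
    by (rule continuous_on_compose2[OF F continuous_on_snd]) auto
  have Qc: "continuous_on A (\<lambda>x. Q (fst x) (snd x))" for A :: "(complex \<times> complex) set"
    unfolding Q_def by (intro continuous_intros)
  have Gc: "continuous_on (cball a 1 \<times> sphere 0 R) (\<lambda>x. G (fst x) (snd x))"
    unfolding G_def
  proof (intro continuous_intros Fs Qc)
    show "\<forall>x\<in>cball a 1 \<times> sphere 0 R. Q (fst x) (snd x) * Ps k s (snd x) \<noteq> 0"
      using Qnz P0 by (auto simp: dist_norm norm_minus_commute)
  qed
  have ul: "uniform_limit (sphere 0 R) G (G a) (at a)"
    by (rule ulim_param[OF Gc compact_sphere]) simp
  have Gt: "continuous_on (sphere 0 R) (G t)" if "cmod (t - a) \<le> 1" for t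
    unfolding G_def Q_def using Qnz[OF that] P0 F
    by (intro continuous_intros) (auto simp: Q_def intro: continuous_on_subset)
  have ev1: "\<forall>\<^sub>F t in at a. t \<in> ball a 1"
    using eventually_at_ball[of 1 a UNIV] by simp
  have intG: "\<forall>\<^sub>F t in at a. G t contour_integrable_on circlepath 0 R"
  proof (rule eventually_mono[OF ev1])
    fix t assume "t \<in> ball a 1"
    then have "cmod (t - a) \<le> 1" by (simp add: dist_norm norm_minus_commute)
    then show "G t contour_integrable_on circlepath 0 R"
      using Gt R0 by (intro contour_integrable_continuous_circlepath) (simp add: path_image_circlepath_nonneg)
  qed
  have lim: "((\<lambda>t. contour_integral (circlepath 0 R) (G t)) \<longlongrightarrow> contour_integral (circlepath 0 R) (G a)) (at a)"
    by (rule contour_integral_uniform_limit_circlepath(2)[OF intG ul _ R0]) simp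
  have dq: "(I t - I a) / (t - a) = contour_integral (circlepath 0 R) (G t)"
    if t: "0 < dist t a" "dist t a < 1" for t
  proof -
    have t1: "cmod (t - a) \<le> 1" using t by (simp add: dist_norm)
    have ta: "t - a \<noteq> 0" using t by simp
    have iQ: "(\<lambda>z. F z / Q u z) contour_integrable_on circlepath 0 R" if "cmod (u - a) \<le> 1" for u
      using int1[OF F good[OF that]] by (simp add: PQ)
    have iG: "G t contour_integrable_on circlepath 0 R"
      using Gt[OF t1] R0 by (intro contour_integrable_continuous_circlepath) (simp add: path_image_circlepath_nonneg)
    have "I t - I a = contour_integral (circlepath 0 R) (\<lambda>z. F z / Q t z - F z / Q a z)"
      unfolding I_def by (rule contour_integral_diff[symmetric]) (use iQ t1 in auto)
    also have "\<dots> = contour_integral (circlepath 0 R) (\<lambda>z. (t - a) * G t z)"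
    proof (rule contour_integral_eq)
      fix z assume "z \<in> path_image (circlepath 0 R)"
      then have z: "z \<in> sphere 0 R" using R0 by (simp add: path_image_circlepath_nonneg)
      have q1: "Q t z \<noteq> 0" by (rule Qnz[OF t1 z])
      have q2: "Ps k s z \<noteq> 0" by (rule P0[OF z])
      show "F z / Q t z - F z / Q a z = (t - a) * G t z"
        unfolding G_def Qa using q1 q2
        by (simp add: divide_simps) (simp add: Q_def algebra_simps)
    qed
    also have "\<dots> = (t - a) * contour_integral (circlepath 0 R) (G t)"
      by (rule contour_integral_lmul[OF iG])
    finally show ?thesis using ta by simp
  qed
  have "((\<lambda>t. (I t - I a) / (t - a)) \<longlongrightarrow> contour_integral (circlepath 0 R) (G a)) (at a)"
    by (rule Lim_transform_within[OF lim, of 1]) (simp_all add: dq)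
  then have D: "(I has_field_derivative contour_integral (circlepath 0 R) (G a)) (at a)"
    by (simp add: has_field_derivative_iff)
  have e1: "(\<lambda>t. contour_integral (circlepath 0 R) (\<lambda>z. F z / Ps k (s(m:=t)) z)) = I"
    unfolding I_def PQ ..
  have e2: "G a = (\<lambda>z. - ((-1)^m * F z * z^(k-m)) / (Ps k s z)^2)"
    unfolding G_def Qa by (simp add: power2_eq_square)
  show ?thesis using D unfolding e1[unfolded R_def] e2[symmetric] R_def a_def .
qed

lemma Phi_deriv:
  assumes f: "f holomorphic_on UNIV" and k: "k \<ge> 1" and m: "m \<in> {1..k}" and i: "i < k"
  shows "((\<lambda>t. Phi k f (s(m:=t)) $ i) has_field_derivative
      contour_integral (circlepath 0 (Bd k s + 1)) (\<lambda>z. - ((-1)^m * (f z * z^i) * z^(k-m)) / (Ps k s z)^2)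
        / (2 * of_real pi * \<i>)) (at (s m))"
proof (rule has_field_derivative_transform_within_open[OF DERIV_cdivide[OF ci_deriv[OF _ k m]] open_ball])
  show "continuous_on UNIV (\<lambda>z. f z * z^i)"
    using holomorphic_on_imp_continuous_on[OF f] by (intro continuous_intros)
  show "s m \<in> ball (s m) 1" by simp
  fix t assume t: "t \<in> ball (s m) 1"
  have g: "goodR k (s(m:=t)) (Bd k s + 1)"
  proof (rule goodR_Bd[OF k])
    show "Bd k (s(m:=t)) \<le> Bd k s + 1" using Bd_upd[OF m, of s t] t by (simp add: dist_norm norm_minus_commute)
  qed
  show "contour_integral (circlepath 0 (Bd k s + 1)) (\<lambda>z. f z * z^i / Ps k (s(m:=t)) z) / (2 * of_real pi * \<i>)
      = Phi k f (s(m:=t)) $ i"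
    by (rule Phi_eq[OF f g i, symmetric])
qed

definition dP :: "nat \<Rightarrow> (nat \<Rightarrow> complex) \<Rightarrow> complex \<Rightarrow> complex" where
  "dP k s z = (\<Sum>h<k. (-1)^h * sc s h * of_nat (k-h) * z^(k-h-1))"

lemma dP_cont[continuous_intros]: "continuous_on A g \<Longrightarrow> continuous_on A (\<lambda>x. dP k s (g x))"
  unfolding dP_def by (intro continuous_intros)

lemma zpow_deriv: "((\<lambda>z::complex. z^n) has_field_derivative of_nat n * z^(n-1)) (at z)"
  using DERIV_power[OF DERIV_ident, of n z UNIV] by simp

lemma Ps_deriv: "((\<lambda>z. Ps k s z) has_field_derivative dP k s z) (at z)"
proof -
  have "((\<lambda>z. \<Sum>h=0..k. (-1)^h * sc s h * z^(k-h)) has_field_derivative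
           (\<Sum>h=0..k. (-1)^h * sc s h * (of_nat (k-h) * z^(k-h-1)))) (at z)"
    by (intro DERIV_sum DERIV_cmult zpow_deriv)
  moreover have "(\<Sum>h=0..k. (-1)^h * sc s h * (of_nat (k-h) * z^(k-h-1))) = dP k s z"
  proof -
    have "{0..k} = insert k {..<k}" by auto
    then show ?thesis unfolding dP_def by (simp add: mult_ac)
  qed
  ultimately show ?thesis unfolding Ps_def by simp
qed

lemma ibp:
  assumes f: "f holomorphic_on UNIV" and g: "goodR k s R"
  shows "contour_integral (circlepath 0 R) (\<lambda>z. deriv f z * z^i / Ps k s z)
       = contour_integral (circlepath 0 R) (\<lambda>z. f z * z^i * dP k s z / (Ps k s z)^2)
         - of_nat i * contour_integral (circlepath 0 R) (\<lambda>z. f z * z^(i-1) / Ps k s z)"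
proof -
  let ?S = "{z. Ps k s z \<noteq> 0}"
  have R0: "R > 0" using g unfolding goodR_def by auto
  have fc: "continuous_on UNIV f" using f holomorphic_on_imp_continuous_on by blast
  have df: "deriv f holomorphic_on UNIV" by (rule holomorphic_deriv[OF f open_UNIV])
  have dfc: "continuous_on UNIV (deriv f)" using df holomorphic_on_imp_continuous_on by blast
  define E where "E z = deriv f z * z^i / Ps k s z + of_nat i * (f z * z^(i-1) / Ps k s z)
                        - f z * z^i * dP k s z / (Ps k s z)^2" for z
  have D: "((\<lambda>z. f z * z^i / Ps k s z) has_field_derivative E z) (at z within ?S)" if z: "z \<in> ?S" for z
  proof -
    have nz: "Ps k s z \<noteq> 0" using z by simp
    have fd: "(f has_field_derivative deriv f z) (at z)"
      by (rule holomorphic_derivI[OF f open_UNIV]) simp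
    have "((\<lambda>z. f z * z^i / Ps k s z) has_field_derivative
            ((deriv f z * z^i + of_nat i * z^(i-1) * f z) * Ps k s z - f z * z^i * dP k s z) / (Ps k s z * Ps k s z)) (at z)"
      by (rule DERIV_divide[OF DERIV_mult[OF fd zpow_deriv] Ps_deriv nz])
    moreover have "((deriv f z * z^i + of_nat i * z^(i-1) * f z) * Ps k s z - f z * z^i * dP k s z) / (Ps k s z * Ps k s z) = E z"
      unfolding E_def using nz by (simp add: field_simps power2_eq_square)
    ultimately show ?thesis by (simp add: has_field_derivative_at_within)
  qed
  have "(E has_contour_integral 0) (circlepath 0 R)"
  proof (rule Cauchy_theorem_primitive[OF D])
    show "path_image (circlepath 0 R) \<subseteq> ?S"
      using goodR_sphere[OF g] R0 by (auto simp: path_image_circlepath_nonneg)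
  qed auto
  then have E0: "contour_integral (circlepath 0 R) E = 0" by (rule contour_integral_unique)
  have iA: "(\<lambda>z. deriv f z * z^i / Ps k s z) contour_integrable_on circlepath 0 R"
    by (rule int1[OF _ g]) (intro continuous_intros dfc)
  have iB: "(\<lambda>z. f z * z^(i-1) / Ps k s z) contour_integrable_on circlepath 0 R"
    by (rule int1[OF _ g]) (intro continuous_intros fc)
  have iC: "(\<lambda>z. f z * z^i * dP k s z / (Ps k s z)^2) contour_integrable_on circlepath 0 R"
    by (rule int2[OF _ g]) (intro continuous_intros fc)
  have "contour_integral (circlepath 0 R) E
      = contour_integral (circlepath 0 R) (\<lambda>z. deriv f z * z^i / Ps k s z + of_nat i * (f z * z^(i-1) / Ps k s z))
        - contour_integral (circlepath 0 R) (\<lambda>z. f z * z^i * dP k s z / (Ps k s z)^2)"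
    unfolding E_def by (rule contour_integral_diff[OF contour_integrable_add[OF iA contour_integrable_lmul[OF iB]] iC])
  also have "contour_integral (circlepath 0 R) (\<lambda>z. deriv f z * z^i / Ps k s z + of_nat i * (f z * z^(i-1) / Ps k s z))
      = contour_integral (circlepath 0 R) (\<lambda>z. deriv f z * z^i / Ps k s z)
        + contour_integral (circlepath 0 R) (\<lambda>z. of_nat i * (f z * z^(i-1) / Ps k s z))"
    by (rule contour_integral_add[OF iA contour_integrable_lmul[OF iB]])
  also have "contour_integral (circlepath 0 R) (\<lambda>z. of_nat i * (f z * z^(i-1) / Ps k s z))
      = of_nat i * contour_integral (circlepath 0 R) (\<lambda>z. f z * z^(i-1) / Ps k s z)"
    by (rule contour_integral_lmul[OF iB])
  finally have "contour_integral (circlepath 0 R) E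
      = contour_integral (circlepath 0 R) (\<lambda>z. deriv f z * z^i / Ps k s z)
        + of_nat i * contour_integral (circlepath 0 R) (\<lambda>z. f z * z^(i-1) / Ps k s z)
        - contour_integral (circlepath 0 R) (\<lambda>z. f z * z^i * dP k s z / (Ps k s z)^2)" .
  then show ?thesis using E0 by (simp add: algebra_simps eq_diff_eq)
qed

lemma nabla_mult:
  assumes i: "i < k" and v: "v \<in> carrier_vec k"
  shows "(nabla k *\<^sub>v v) $ i = of_nat i * v $ (i - 1)"
proof -
  have "(nabla k *\<^sub>v v) $ i = (\<Sum>j=0..<k. (if i = j + 1 then of_nat (j+1) else 0) * v $ j)"
    using i v by (simp add: nabla_def scalar_prod_def)
  also have "\<dots> = (\<Sum>j=0..<k. if j = i - 1 then (if i = 0 then 0 else of_nat i * v $ j) else 0)"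
    by (intro sum.cong refl) auto
  also have "\<dots> = of_nat i * v $ (i - 1)" using i by (cases "i = 0") auto
  finally show ?thesis .
qed

lemma vec_idx: "dim_vec X = k \<Longrightarrow> i < k \<Longrightarrow> (- X + vec k F) $ i = - (X $ i) + F i"
  by simp

lemma part3:
  assumes f: "f holomorphic_on UNIV" and k: "k \<ge> 1"
  shows "Phi k (deriv f) s =
              - (nabla k *\<^sub>v Phi k f s)
              + vec k (\<lambda>i. \<Sum>h<k. of_nat (k - h) * sc s h *
                    deriv (\<lambda>t. Phi k f (s(h + 1 := t)) $ i) (s (h + 1)))"
proof (rule eq_vecI)
  show "dim_vec (Phi k (deriv f) s) = dim_vec (- (nabla k *\<^sub>v Phi k f s)
              + vec k (\<lambda>i. \<Sum>h<k. of_nat (k - h) * sc s h *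
                    deriv (\<lambda>t. Phi k f (s(h + 1 := t)) $ i) (s (h + 1))))"
    by (simp add: Phi_dim)
  fix i assume "i < dim_vec (- (nabla k *\<^sub>v Phi k f s)
              + vec k (\<lambda>i. \<Sum>h<k. of_nat (k - h) * sc s h *
                    deriv (\<lambda>t. Phi k f (s(h + 1 := t)) $ i) (s (h + 1))))"
  then have i: "i < k" by simp
  define R where "R = Bd k s + 1"
  have gR: "goodR k s R" unfolding R_def by (rule goodR_Bd[OF k]) simp
  define c where "c = 2 * of_real pi * \<i>"
  have fc: "continuous_on UNIV f" using f holomorphic_on_imp_continuous_on by blast
  have df: "deriv f holomorphic_on UNIV" by (rule holomorphic_deriv[OF f open_UNIV])
  have L: "Phi k (deriv f) s $ i = contour_integral (circlepath 0 R) (\<lambda>z. deriv f z * z^i / Ps k s z) / c"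
    unfolding c_def by (rule Phi_eq[OF df gR i])
  have N: "(nabla k *\<^sub>v Phi k f s) $ i = of_nat i * (contour_integral (circlepath 0 R) (\<lambda>z. f z * z^(i-1) / Ps k s z) / c)"
  proof (cases "i = 0")
    case True then show ?thesis using nabla_mult[OF i Phi_carrier] by simp
  next
    case False
    have "i - 1 < k" using i by linarith
    have "Phi k f s $ (i - 1) = contour_integral (circlepath 0 R) (\<lambda>z. f z * z^(i-1) / Ps k s z) / c"
      unfolding c_def by (rule Phi_eq[OF f gR \<open>i - 1 < k\<close>])
    then show ?thesis using nabla_mult[OF i Phi_carrier] by simp
  qed
  define T where "T h z = - ((-1)^(h+1) * (f z * z^i) * z^(k-(h+1))) / (Ps k s z)^2" for h z
  have iT: "T h contour_integrable_on circlepath 0 R" for h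
    unfolding T_def by (rule int2[OF _ gR]) (intro continuous_intros fc)
  have Dh: "deriv (\<lambda>t. Phi k f (s(h + 1 := t)) $ i) (s (h + 1)) = contour_integral (circlepath 0 R) (T h) / c"
    if h: "h < k" for h
  proof -
    have "h + 1 \<in> {1..k}" using h by simp
    from DERIV_imp_deriv[OF Phi_deriv[OF f k this i, of s]]
    show ?thesis unfolding T_def R_def c_def .
  qed
  have "(\<Sum>h<k. of_nat (k - h) * sc s h * deriv (\<lambda>t. Phi k f (s(h + 1 := t)) $ i) (s (h + 1)))
      = (\<Sum>h<k. contour_integral (circlepath 0 R) (\<lambda>z. of_nat (k - h) * sc s h * T h z) / c)"
  proof (intro sum.cong refl)
    fix h assume "h \<in> {..<k}"
    then have "h < k" by simp
    show "of_nat (k - h) * sc s h * deriv (\<lambda>t. Phi k f (s(h + 1 := t)) $ i) (s (h + 1))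
        = contour_integral (circlepath 0 R) (\<lambda>z. of_nat (k - h) * sc s h * T h z) / c"
      unfolding Dh[OF \<open>h < k\<close>] contour_integral_lmul[OF iT] by simp
  qed
  also have "\<dots> = (\<Sum>h<k. contour_integral (circlepath 0 R) (\<lambda>z. of_nat (k - h) * sc s h * T h z)) / c"
    by (rule sum_divide_distrib[symmetric])
  also have "(\<Sum>h<k. contour_integral (circlepath 0 R) (\<lambda>z. of_nat (k - h) * sc s h * T h z))
      = contour_integral (circlepath 0 R) (\<lambda>z. \<Sum>h<k. of_nat (k - h) * sc s h * T h z)"
    by (rule contour_integral_sum[symmetric]) (auto intro: contour_integrable_lmul iT)
  also have "\<dots> = contour_integral (circlepath 0 R) (\<lambda>z. f z * z^i * dP k s z / (Ps k s z)^2)"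
  proof (rule contour_integral_eq)
    fix z
    show "(\<Sum>h<k. of_nat (k - h) * sc s h * T h z) = f z * z^i * dP k s z / (Ps k s z)^2"
      unfolding T_def dP_def
      by (simp add: sum_distrib_left sum_divide_distrib mult_ac)
  qed
  finally have S: "(\<Sum>h<k. of_nat (k - h) * sc s h * deriv (\<lambda>t. Phi k f (s(h + 1 := t)) $ i) (s (h + 1)))
      = contour_integral (circlepath 0 R) (\<lambda>z. f z * z^i * dP k s z / (Ps k s z)^2) / c" .
  show "Phi k (deriv f) s $ i = (- (nabla k *\<^sub>v Phi k f s)
              + vec k (\<lambda>i. \<Sum>h<k. of_nat (k - h) * sc s h *
                    deriv (\<lambda>t. Phi k f (s(h + 1 := t)) $ i) (s (h + 1)))) $ i"
    unfolding L
  proof (subst vec_idx)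
    show "dim_vec (nabla k *\<^sub>v Phi k f s) = k" by (simp add: nabla_def)
    show "i < k" by (rule i)
    show "contour_integral (circlepath 0 R) (\<lambda>z. deriv f z * z ^ i / Ps k s z) / c =
      - (nabla k *\<^sub>v Phi k f s) $ i + (\<Sum>h<k. of_nat (k - h) * sc s h *
                    deriv (\<lambda>t. Phi k f (s(h + 1 := t)) $ i) (s (h + 1)))"
      unfolding N S ibp[OF f gR] by (simp add: diff_divide_distrib algebra_simps)
  qed
qed

theorem mainTheorem8:
  fixes k :: nat and f :: "complex \<Rightarrow> complex"
  assumes "k \<ge> 2" and "f holomorphic_on UNIV"
  shows "(\<forall>g s. g holomorphic_on UNIV \<longrightarrow>
            Phi k (\<lambda>z. g z * f z) s = mat_fun g (compA k s) *\<^sub>v Phi k f s)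
       \<and> (\<forall>s. Phi k f s = mat_fun f (compA k s) *\<^sub>v Phi k (\<lambda>_. 1) s)
       \<and> (\<forall>s. Phi k (deriv f) s =
              - (nabla k *\<^sub>v Phi k f s)
              + vec k (\<lambda>i. \<Sum>h<k. of_nat (k - h) * sc s h *
                    deriv (\<lambda>t. Phi k f (s(h + 1 := t)) $ i) (s (h + 1))))"
proof -
  have k: "k \<ge> 1" using assms(1) by simp
  have p1: "\<forall>g s. g holomorphic_on UNIV \<longrightarrow>
            Phi k (\<lambda>z. g z * f z) s = mat_fun g (compA k s) *\<^sub>v Phi k f s"
    using part1[OF assms(2) _ k] by blast
  have p2: "Phi k f s = mat_fun f (compA k s) *\<^sub>v Phi k (\<lambda>_. 1) s" for s
  proof -
    have one: "(\<lambda>_. 1::complex) holomorphic_on UNIV" by simp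
    have "Phi k (\<lambda>z. f z * 1) s = mat_fun f (compA k s) *\<^sub>v Phi k (\<lambda>_. 1) s"
      by (rule part1[OF one assms(2) k])
    then show ?thesis by simp
  qed
  show ?thesis using p1 p2 part3[OF assms(2) k] by blast
qed

end
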